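(* Let $n,k\ge1$, $\mathbf{k}=(k,k,\dots,k)$ ($n$ entries), and $D\in\mathcal{D}_{\mathbf{k}}$. Then the Walking Algorithm on $(T(D),R(D))$ terminates only after it marks the smallest rank-$1$ box (the box of rank $1$ with the smallest index) and writes down its index; i.e. the last box marked is the smallest rank-$1$ box.
   Context: $N=n+nk$. $\mathcal{D}_{\mathbf{k}}$: sequences $(a_1,\dots,a_N)$ whose positive entries are the $n$ entries $k$, other entries $-1$, all partial sums $a_1+\cdots+a_{i-1}\ge0$. SW-word: $S^{k}$ for an up step, $W$ for $-1$. Filling Algorithm producing $T(D)$: $n$ columns, each with $k+1$ cells; place $1$ at top of column 1; having placed $1,\dots,i-1$, the lowest filled entry of a column is active if not in row $k+1$; if the $i$-th letter is $W$ place $i$ below the smallest active entry, otherwise at the top of the leftmost empty column; continue until $1,\dots,N$ placed. Entries of $T(D)$ are indices. Ranking Algorithm producing $R(D)$: ranks $0,\dots,k$ to column-1 indices top to bottom; for $i=2,\dots,n$, if the top index of column $i$ is $A+1$ and index $A$ has rank $a$, column $i$ gets ranks $a,\dots,a+k$ top to bottom. Among boxes of equal rank, the largest (smallest) is the one with largest (smallest) index. Walking Algorithm: go to the largest rank-$0$ box, mark it, write its index. Repeat: if the current box is in row 1, let $r$ be the rank of the bottom box of its column; otherwise let $r$ be the rank of the box directly above. If an unmarked box of rank $r$ exists, go to the unmarked rank-$r$ box with largest index, mark it and write its index; otherwise stop. *)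

theory Defs
  imports Main
begin

text \<open>Boxes are pairs (column, row), columns 1..n, rows 1..k+1 (row 1 = top).
  A tableau is a function T :: nat \<Rightarrow> nat \<Rightarrow> nat, T c r = index in box (c,r),
  with 0 meaning the box is empty (indices are 1..N).\<close>

type_synonym tableau = "nat \<Rightarrow> nat \<Rightarrow> nat"
type_synonym box = "nat \<times> nat"

definition Dk :: "nat \<Rightarrow> nat \<Rightarrow> int list set" where
  "Dk n k = {a. length a = n + n * k \<and> (\<forall>x\<in>set a. x = int k \<or> x = -1)
              \<and> length (filter (\<lambda>x. x = int k) a) = n
              \<and> (\<forall>i. 1 \<le> i \<and> i \<le> length a \<longrightarrow> sum_list (take (i - 1) a) \<ge> 0)}"

definition boxes :: "nat \<Rightarrow> nat \<Rightarrow> box set" where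
  "boxes n k = {1..n} \<times> {1..k+1}"

definition col_nonempty :: "nat \<Rightarrow> tableau \<Rightarrow> nat \<Rightarrow> bool" where
  "col_nonempty k T c \<longleftrightarrow> (\<exists>r\<in>{1..k+1}. T c r \<noteq> 0)"

definition lowest_row :: "nat \<Rightarrow> tableau \<Rightarrow> nat \<Rightarrow> nat" where
  "lowest_row k T c = Max {r\<in>{1..k+1}. T c r \<noteq> 0}"

definition active_cols :: "nat \<Rightarrow> nat \<Rightarrow> tableau \<Rightarrow> nat set" where
  "active_cols n k T = {c\<in>{1..n}. col_nonempty k T c \<and> lowest_row k T c \<noteq> k + 1}"

definition fill_step :: "nat \<Rightarrow> nat \<Rightarrow> tableau \<Rightarrow> nat \<Rightarrow> int \<Rightarrow> tableau" where
  "fill_step n k T i x =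
     (if x = -1 then
        (let c = ARG_MIN (\<lambda>c. T c (lowest_row k T c)) c. c \<in> active_cols n k T
         in T(c := (T c)(lowest_row k T c + 1 := i)))
      else
        (let c = LEAST c. c \<in> {1..n} \<and> \<not> col_nonempty k T c
         in T(c := (T c)(1 := i))))"

definition fill_init :: tableau where
  "fill_init = (\<lambda>c r. if c = 1 \<and> r = 1 then 1 else 0)"

text \<open>T(D): index i (2 \<le> i \<le> N) is placed according to the i-th letter, i.e. a_i
  (W iff a_i = -1, S iff a_i = k).\<close>
definition fillT :: "nat \<Rightarrow> nat \<Rightarrow> int list \<Rightarrow> tableau" where
  "fillT n k a = foldl (\<lambda>T i. fill_step n k T i (a ! (i - 1))) fill_init [2..<length a + 1]"

definition pos_of :: "nat \<Rightarrow> nat \<Rightarrow> tableau \<Rightarrow> nat \<Rightarrow> box" where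
  "pos_of n k T i = (THE b. b \<in> boxes n k \<and> T (fst b) (snd b) = i)"

definition top_rank :: "nat \<Rightarrow> nat \<Rightarrow> tableau \<Rightarrow> nat \<Rightarrow> nat" where
  "top_rank n k T = foldl (\<lambda>f c. f(c := (let b = pos_of n k T (T c 1 - 1)
                                             in f (fst b) + (snd b - 1))))
                          (\<lambda>_. 0) [2..<n+1]"

definition rankR :: "nat \<Rightarrow> nat \<Rightarrow> tableau \<Rightarrow> box \<Rightarrow> nat" where
  "rankR n k T b = top_rank n k T (fst b) + (snd b - 1)"

definition idx :: "tableau \<Rightarrow> box \<Rightarrow> nat" where
  "idx T b = T (fst b) (snd b)"

definition walk_start :: "nat \<Rightarrow> nat \<Rightarrow> tableau \<Rightarrow> box" where
  "walk_start n k T = (ARG_MAX (idx T) b. b \<in> boxes n k \<and> rankR n k T b = 0)"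

definition walk_next :: "nat \<Rightarrow> nat \<Rightarrow> tableau \<Rightarrow> box \<Rightarrow> box set \<Rightarrow> box option" where
  "walk_next n k T cur marked =
     (let r = (if snd cur = 1 then rankR n k T (fst cur, k + 1)
               else rankR n k T (fst cur, snd cur - 1));
          C = {b\<in>boxes n k. rankR n k T b = r \<and> b \<notin> marked}
      in if C = {} then None else Some (ARG_MAX (idx T) b. b \<in> C))"

fun walk_iter :: "nat \<Rightarrow> nat \<Rightarrow> tableau \<Rightarrow> nat \<Rightarrow> box list \<Rightarrow> box list" where
  "walk_iter n k T 0 vs = vs"
| "walk_iter n k T (Suc f) vs =
     (case walk_next n k T (last vs) (set vs) of
        None \<Rightarrow> vs
      | Some b \<Rightarrow> walk_iter n k T f (vs @ [b]))"

definition walk :: "nat \<Rightarrow> nat \<Rightarrow> tableau \<Rightarrow> box list" where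
  "walk n k T = walk_iter n k T (n * (k + 1)) [walk_start n k T]"

definition smallest_rank1 :: "nat \<Rightarrow> nat \<Rightarrow> tableau \<Rightarrow> box" where
  "smallest_rank1 n k T = (ARG_MIN (idx T) b. b \<in> boxes n k \<and> rankR n k T b = 1)"

end

theory Submission
  imports Defs
begin

lemma argmax_nat_fin:
  fixes f :: "'a \<Rightarrow> nat"
  assumes "finite S" "x \<in> S"
  shows "(ARG_MAX f b. b \<in> S) \<in> S \<and> (\<forall>y\<in>S. f y \<le> f (ARG_MAX f b. b \<in> S))"
proof -
  have "\<forall>y. y \<in> S \<longrightarrow> f y < Suc (Max (f ` S))"
    using assms(1) by (simp add: le_imp_less_Suc)
  from arg_max_nat_lemma[of "\<lambda>b. b \<in> S" x f, OF assms(2) this] show ?thesis by blast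
qed

lemma argmin_nat:
  fixes f :: "'a \<Rightarrow> nat"
  assumes "P x"
  shows "P (ARG_MIN f b. P b) \<and> (\<forall>y. P y \<longrightarrow> f (ARG_MIN f b. P b) \<le> f y)"
  using arg_min_nat_lemma[of P x f] assms by blast

definition phi :: "nat \<Rightarrow> box \<Rightarrow> box" where
  "phi k b = (if snd b = 1 then (fst b, k+1) else (fst b, snd b - 1))"

lemma finite_boxes: "finite (boxes n k)" by (simp add: boxes_def)
lemma card_boxes: "card (boxes n k) = n * (k+1)" by (simp add: boxes_def card_cartesian_product)

lemma phi_in: "b \<in> boxes n k \<Longrightarrow> phi k b \<in> boxes n k"
  by (auto simp: phi_def boxes_def)
lemma phi_inj: "inj_on (phi k) (boxes n k)"
  by (auto simp: inj_on_def phi_def boxes_def split: if_splits)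

lemma walk_next_eq: "walk_next n k T cur M =
   (let C = {b\<in>boxes n k. rankR n k T b = rankR n k T (phi k cur) \<and> b \<notin> M}
    in if C = {} then None else Some (ARG_MAX (idx T) b. b \<in> C))"
  unfolding walk_next_def phi_def Let_def by (cases "snd cur = 1") simp_all

definition winv :: "nat \<Rightarrow> nat \<Rightarrow> tableau \<Rightarrow> box list \<Rightarrow> bool" where
  "winv n k T vs \<longleftrightarrow> vs \<noteq> [] \<and> distinct vs \<and> set vs \<subseteq> boxes n k
     \<and> rankR n k T (hd vs) = 0
     \<and> map (rankR n k T) (tl vs) = map (\<lambda>b. rankR n k T (phi k b)) (butlast vs)
     \<and> (\<forall>j. 0 < j \<and> j < length vs \<longrightarrow> (\<forall>b\<in>boxes n k. rankR n k T b = rankR n k T (vs!j)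
            \<and> b \<notin> set (take j vs) \<longrightarrow> idx T b \<le> idx T (vs!j)))"

lemma winv_step:
  assumes "winv n k T vs" "walk_next n k T (last vs) (set vs) = Some b"
  shows "winv n k T (vs @ [b])"
proof -
  define C where "C = {b\<in>boxes n k. rankR n k T b = rankR n k T (phi k (last vs)) \<and> b \<notin> set vs}"
  have CN: "C \<noteq> {}" and bdef: "b = (ARG_MAX (idx T) b. b \<in> C)"
    using assms(2) unfolding walk_next_eq C_def[symmetric] Let_def by (auto split: if_splits)
  then obtain x where "x \<in> C" by blast
  have fC: "finite C" unfolding C_def using finite_boxes by simp
  from argmax_nat_fin[OF fC \<open>x \<in> C\<close>, of "idx T"] bdef
  have bC: "b \<in> C" and bmax: "\<forall>y\<in>C. idx T y \<le> idx T b" by auto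
  have ne: "vs \<noteq> []" using assms(1) winv_def by blast
  have tl: "tl (vs @ [b]) = tl vs @ [b]" using ne by simp
  have bl: "map (\<lambda>b. rankR n k T (phi k b)) vs = map (\<lambda>b. rankR n k T (phi k b)) (butlast vs) @ [rankR n k T (phi k (last vs))]"
  proof -
    have vsp: "butlast vs @ [last vs] = vs" using ne by simp
    have "map (\<lambda>b. rankR n k T (phi k b)) (butlast vs @ [last vs]) = map (\<lambda>b. rankR n k T (phi k b)) (butlast vs) @ [rankR n k T (phi k (last vs))]" by simp
    then show ?thesis unfolding vsp .
  qed
  show ?thesis
    unfolding winv_def
  proof (intro conjI)
    show "vs @ [b] \<noteq> []" by simp
    show "distinct (vs @ [b])" using assms(1) bC unfolding winv_def C_def by auto
    show "set (vs @ [b]) \<subseteq> boxes n k" using assms(1) bC unfolding winv_def C_def by auto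
    show "rankR n k T (hd (vs @ [b])) = 0" using assms(1) ne unfolding winv_def by simp
    show "map (rankR n k T) (tl (vs @ [b])) = map (\<lambda>b. rankR n k T (phi k b)) (butlast (vs @ [b]))"
      using assms(1) bC bl unfolding tl winv_def C_def by simp
    show "\<forall>j. 0 < j \<and> j < length (vs @ [b]) \<longrightarrow>
        (\<forall>ba\<in>boxes n k. rankR n k T ba = rankR n k T ((vs @ [b]) ! j) \<and> ba \<notin> set (take j (vs @ [b])) \<longrightarrow>
            idx T ba \<le> idx T ((vs @ [b]) ! j))"
    proof (intro allI impI ballI)
      fix j ba assume j: "0 < j \<and> j < length (vs @ [b])"
        and h: "ba \<in> boxes n k" "rankR n k T ba = rankR n k T ((vs @ [b]) ! j) \<and> ba \<notin> set (take j (vs @ [b]))"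
      show "idx T ba \<le> idx T ((vs @ [b]) ! j)"
      proof (cases "j < length vs")
        case True
        then show ?thesis using assms(1) h j unfolding winv_def by (auto simp: nth_append)
      next
        case False
        then have "j = length vs" using j by simp
        then have e: "(vs @ [b]) ! j = b" "take j (vs @ [b]) = vs" by simp_all
        have "ba \<in> C" using h bC unfolding e C_def by simp
        then show ?thesis using bmax unfolding e by blast
      qed
    qed
  qed
qed

lemma walk_iter_inv:
  assumes "winv n k T vs"
  shows "winv n k T (walk_iter n k T f vs) \<and>
    (walk_next n k T (last (walk_iter n k T f vs)) (set (walk_iter n k T f vs)) = None
     \<or> length (walk_iter n k T f vs) = length vs + f)"
  using assms
proof (induction f arbitrary: vs)
  case 0
  then show ?case by simp
next
  case (Suc f)
  show ?case
  proof (cases "walk_next n k T (last vs) (set vs)")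
    case None
    then show ?thesis using Suc.prems by simp
  next
    case (Some b)
    have "winv n k T (vs @ [b])" using winv_step[OF Suc.prems Some] .
    from Suc.IH[OF this] show ?thesis using Some by simp
  qed
qed

lemma walk_final:
  assumes n1: "n \<ge> 1" and k1: "k \<ge> 1"
    and r11: "rankR n k T (1,1) = 0" and r12: "rankR n k T (1,2) = 1"
    and key: "\<forall>b\<in>boxes n k. b \<noteq> (1,2) \<and> rankR n k T b = 1 \<longrightarrow> idx T (1,2) < idx T b"
  shows "walk_next n k T (last (walk n k T)) (set (walk n k T)) = None
         \<and> last (walk n k T) = smallest_rank1 n k T"
proof -
  let ?R = "rankR n k T"
  have b11: "(1,1) \<in> boxes n k" and b12: "(1::nat,2::nat) \<in> boxes n k" using n1 k1 by (auto simp: boxes_def)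
  have ws: "walk_start n k T \<in> boxes n k \<and> ?R (walk_start n k T) = 0"
    using argmax_nat_fin[of "{b. b \<in> boxes n k \<and> rankR n k T b = 0}" "(1,1)" "idx T"] b11 r11 finite_boxes
    unfolding walk_start_def by simp
  have w0: "winv n k T [walk_start n k T]" using ws unfolding winv_def by simp
  define vs where "vs = walk n k T"
  have WI: "winv n k T vs \<and> (walk_next n k T (last vs) (set vs) = None \<or> length vs = 1 + n * (k+1))"
    using walk_iter_inv[OF w0, of "n * (k+1)"] unfolding vs_def walk_def by simp
  then have inv: "winv n k T vs" by blast
  have ne: "vs \<noteq> []" and dis: "distinct vs" and sub: "set vs \<subseteq> boxes n k"
    and hd0: "?R (hd vs) = 0"
    and chain: "map ?R (tl vs) = map (\<lambda>b. ?R (phi k b)) (butlast vs)"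
    and greedy: "\<forall>j. 0 < j \<and> j < length vs \<longrightarrow> (\<forall>b\<in>boxes n k. ?R b = ?R (vs!j)
            \<and> b \<notin> set (take j vs) \<longrightarrow> idx T b \<le> idx T (vs!j))"
    using inv unfolding winv_def by blast+
  have "length vs = card (set vs)" using dis by (simp add: distinct_card)
  also have "\<dots> \<le> n * (k+1)" using card_mono[OF finite_boxes sub] card_boxes by simp
  finally have None: "walk_next n k T (last vs) (set vs) = None" using WI by auto
  define L where "L = last vs"
  define \<rho> where "\<rho> = ?R (phi k L)"
  have Lin: "L \<in> boxes n k" using ne sub L_def by auto
  have allin: "{b\<in>boxes n k. ?R b = \<rho>} \<subseteq> set vs"
    using None unfolding walk_next_eq Let_def \<rho>_def L_def by (auto split: if_splits)
  define cR where "cR = length (filter (\<lambda>b. ?R b = \<rho>) vs)"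
  define cP where "cP = length (filter (\<lambda>b. ?R (phi k b) = \<rho>) vs)"
  have cR_eq: "cR = card {b\<in>boxes n k. ?R b = \<rho>}"
  proof -
    have "cR = card ({b. ?R b = \<rho>} \<inter> set vs)" unfolding cR_def by (rule distinct_length_filter[OF dis])
    also have "{b. ?R b = \<rho>} \<inter> set vs = {b\<in>boxes n k. ?R b = \<rho>}" using allin sub by blast
    finally show ?thesis .
  qed
  have cntP: "card {b\<in>boxes n k. ?R (phi k b) = \<rho>'} \<le> card {b\<in>boxes n k. ?R b = \<rho>'}" for \<rho>'
  proof -
    have "card {b\<in>boxes n k. ?R (phi k b) = \<rho>'} = card (phi k ` {b\<in>boxes n k. ?R (phi k b) = \<rho>'})"
      using card_image[OF inj_on_subset[OF phi_inj]] by (metis (no_types, lifting) mem_Collect_eq subsetI)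
    also have "\<dots> \<le> card {b\<in>boxes n k. ?R b = \<rho>'}"
      by (rule card_mono) (auto simp: finite_boxes phi_in)
    finally show ?thesis .
  qed
  have cP_eq: "cP = card ({b. ?R (phi k b) = \<rho>} \<inter> set vs)" unfolding cP_def by (rule distinct_length_filter[OF dis])
  have cP_le: "cP \<le> card {b\<in>boxes n k. ?R b = \<rho>}"
  proof -
    have "cP \<le> card {b\<in>boxes n k. ?R (phi k b) = \<rho>}"
      unfolding cP_eq by (rule card_mono) (use sub finite_boxes in auto)
    then show ?thesis using cntP[of \<rho>] by simp
  qed
  have vs_split1: "vs = hd vs # tl vs" using ne by simp
  have vs_split2: "vs = butlast vs @ [L]" using ne L_def by simp
  have e1: "cR = (if ?R (hd vs) = \<rho> then 1 else 0) + length (filter (\<lambda>b. ?R b = \<rho>) (tl vs))"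
    unfolding cR_def by (subst vs_split1) simp
  have e2: "length (filter (\<lambda>b. ?R b = \<rho>) (tl vs)) = length (filter (\<lambda>x. x = \<rho>) (map ?R (tl vs)))"
    by (simp add: filter_map o_def)
  have e3: "length (filter (\<lambda>x. x = \<rho>) (map ?R (tl vs))) = length (filter (\<lambda>b. ?R (phi k b) = \<rho>) (butlast vs))"
    unfolding chain by (simp add: filter_map o_def)
  have e4: "length (filter (\<lambda>b. ?R (phi k b) = \<rho>) (butlast vs)) + 1 = cP"
    unfolding cP_def by (subst (2) vs_split2) (simp add: \<rho>_def)
  have rel: "cR + 1 = (if ?R (hd vs) = \<rho> then 1 else 0) + cP" using e1 e2 e3 e4 by simp
  have rho0: "\<rho> = 0"
  proof (rule ccontr)
    assume "\<rho> \<noteq> 0"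
    then have "cR + 1 = cP" using rel hd0 by simp
    then show False using cP_le cR_eq by simp
  qed
  have "card {b\<in>boxes n k. ?R (phi k b) = \<rho>} \<le> cP"
    using rel rho0 hd0 cR_eq cntP[of \<rho>] by simp
  then have "card {b\<in>boxes n k. ?R (phi k b) = \<rho>} \<le> card ({b. ?R (phi k b) = \<rho>} \<inter> set vs)"
    using cP_eq by simp
  moreover have "{b. ?R (phi k b) = \<rho>} \<inter> set vs \<subseteq> {b\<in>boxes n k. ?R (phi k b) = \<rho>}" using sub by blast
  ultimately have eqs: "{b. ?R (phi k b) = \<rho>} \<inter> set vs = {b\<in>boxes n k. ?R (phi k b) = \<rho>}"
    by (intro card_seteq) (simp_all add: finite_boxes)
  have p12: "phi k (1,2) = (1,1)" by (simp add: phi_def)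
  have "(1::nat,2::nat) \<in> {b\<in>boxes n k. ?R (phi k b) = \<rho>}" using b12 p12 r11 rho0 by simp
  then have "(1::nat,2::nat) \<in> {b. ?R (phi k b) = \<rho>} \<inter> set vs" unfolding eqs .
  then have s_in: "(1,2) \<in> set vs" by (rule IntD2)
  have RL: "?R L = 1"
  proof (cases "snd L = 1")
    case True
    then have "?R (phi k L) = top_rank n k T (fst L) + k" by (simp add: phi_def rankR_def)
    then show ?thesis using rho0 \<rho>_def k1 by simp
  next
    case False
    have "snd L \<ge> 1" using Lin by (auto simp: boxes_def)
    then have "snd L \<ge> 2" using False by simp
    then have "?R (phi k L) + 1 = ?R L" using False by (simp add: phi_def rankR_def)
    then show ?thesis using rho0 \<rho>_def by simp
  qed
  have LS: "L = (1,2)"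
  proof (rule ccontr)
    assume neq: "L \<noteq> (1,2)"
    then have lt: "idx T (1,2) < idx T L" using key Lin RL by blast
    obtain j where j: "j < length vs" "vs ! j = (1,2)" using s_in by (auto simp: in_set_conv_nth)
    have Llast: "L = vs ! (length vs - 1)" using ne L_def by (simp add: last_conv_nth)
    have j0: "j \<noteq> 0"
    proof
      assume "j = 0"
      then have "hd vs = (1,2)" using j ne by (simp add: hd_conv_nth)
      then show False using hd0 r12 by simp
    qed
    have "j \<noteq> length vs - 1" using j neq Llast by auto
    then have jl: "j < length vs - 1" using j(1) by linarith
    have "L \<notin> set (take j vs)"
    proof
      assume "L \<in> set (take j vs)"
      then obtain i where i: "i < j" "vs ! i = L" by (auto simp: in_set_conv_nth)
      have "vs ! i = vs ! (length vs - 1)" using i Llast by simp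
      moreover have "i < length vs" "length vs - 1 < length vs" using i jl by linarith+
      ultimately have "i = length vs - 1" using nth_eq_iff_index_eq[OF dis] by blast
      then show False using i jl by linarith
    qed
    moreover have "?R L = ?R (vs ! j)" using RL r12 j by simp
    moreover have "0 < j \<and> j < length vs" using j j0 by simp
    ultimately have "idx T L \<le> idx T (vs ! j)" using greedy Lin by blast
    then show False using lt j by simp
  qed
  have "smallest_rank1 n k T = (1,2)"
  proof -
    define m where "m = (ARG_MIN (idx T) b. b \<in> boxes n k \<and> ?R b = 1)"
    have A: "(m \<in> boxes n k \<and> ?R m = 1) \<and> (\<forall>y. y \<in> boxes n k \<and> ?R y = 1 \<longrightarrow> idx T m \<le> idx T y)"
      unfolding m_def by (rule argmin_nat) (use b12 r12 in simp)
    then have "idx T m \<le> idx T (1,2)" using b12 r12 by blast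
    then have "m = (1,2)" using key A by (meson not_less)
    then show ?thesis unfolding smallest_rank1_def m_def .
  qed
  then show ?thesis using None LS L_def vs_def by simp
qed

definition cntk :: "nat \<Rightarrow> int list \<Rightarrow> nat" where
  "cntk k xs = length (filter (\<lambda>x. x = int k) xs)"

definition tst :: "nat \<Rightarrow> nat \<Rightarrow> int list \<Rightarrow> nat \<Rightarrow> tableau" where
  "tst n k a i = foldl (\<lambda>T i. fill_step n k T i (a ! (i - 1))) fill_init [2..<Suc i]"

lemma fillT_tst: "fillT n k a = tst n k a (length a)"
  by (simp add: fillT_def tst_def)

lemma tst_Suc: "1 \<le> i \<Longrightarrow> tst n k a (Suc i) = fill_step n k (tst n k a i) (Suc i) (a ! i)"
proof -
  assume "1 \<le> i"
  then have "[2..<Suc (Suc i)] = [2..<Suc i] @ [Suc i]" by simp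
  then show ?thesis unfolding tst_def by simp
qed

lemma tst_1: "tst n k a 1 = fill_init" by (simp add: tst_def)

lemma fill_step_cell: "fill_step n k T i x c r = T c r \<or> fill_step n k T i x c r = i"
  by (auto simp: fill_step_def Let_def)

lemma tst_mono_cell: "j \<le> i \<Longrightarrow> tst n k a i c r = tst n k a j c r \<or> tst n k a i c r > j"
proof (induction i)
  case 0
  then show ?case by simp
next
  case (Suc i)
  show ?case
  proof (cases "j = Suc i")
    case True then show ?thesis by simp
  next
    case False
    then have ji: "j \<le> i" using Suc.prems by simp
    show ?thesis
    proof (cases "i = 0")
      case True
      then show ?thesis using ji by (simp add: tst_def)
    next
      case False
      then have "tst n k a (Suc i) = fill_step n k (tst n k a i) (Suc i) (a ! i)" using tst_Suc by simp
      then have "tst n k a (Suc i) c r = tst n k a i c r \<or> tst n k a (Suc i) c r = Suc i"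
        using fill_step_cell by metis
      then show ?thesis using Suc.IH[OF ji] ji by auto
    qed
  qed
qed

lemma sum_list_cntk:
  assumes "\<forall>x\<in>set xs. x = int k \<or> x = -1" "k \<ge> 1"
  shows "sum_list xs = int k * int (cntk k xs) - (int (length xs) - int (cntk k xs))"
  using assms
proof (induction xs)
  case Nil
  then show ?case by (simp add: cntk_def)
next
  case (Cons x xs)
  then have IH: "sum_list xs = int k * int (cntk k xs) - (int (length xs) - int (cntk k xs))" by simp
  have "x = int k \<or> x = -1" using Cons.prems by simp
  then show ?case
  proof
    assume "x = int k" then show ?thesis using IH by (simp add: cntk_def algebra_simps)
  next
    assume "x = -1" then show ?thesis using IH Cons.prems(2) by (simp add: cntk_def algebra_simps)
  qed
qed

lemma cntk_le: "cntk k xs \<le> length xs" by (simp add: cntk_def)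

lemma cntk_take_le: "cntk k (take i xs) \<le> cntk k xs"
proof -
  have "cntk k xs = cntk k (take i xs) + cntk k (drop i xs)"
    by (metis append_take_drop_id cntk_def filter_append length_append)
  then show ?thesis by simp
qed

lemma Dk_facts:
  assumes "a \<in> Dk n k" "n \<ge> 1" "k \<ge> 1"
  shows "length a = n + n * k" and "\<forall>x\<in>set a. x = int k \<or> x = -1" and "cntk k a = n"
    and "\<And>i. i \<le> length a \<Longrightarrow> sum_list (take i a) \<ge> 0"
proof -
  show L: "length a = n + n * k" using assms unfolding Dk_def by simp
  show S: "\<forall>x\<in>set a. x = int k \<or> x = -1" using assms unfolding Dk_def by simp
  show C: "cntk k a = n" using assms unfolding Dk_def cntk_def by simp
  fix i assume i: "i \<le> length a"
  show "sum_list (take i a) \<ge> 0"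
  proof (cases "i = length a")
    case True
    have "sum_list a = int k * int n - (int (n + n * k) - int n)"
      using sum_list_cntk[OF S assms(3)] L C by simp
    then show ?thesis using True by (simp add: algebra_simps)
  next
    case False
    then have "1 \<le> Suc i \<and> Suc i \<le> length a" using i by simp
    then have "sum_list (take (Suc i - 1) a) \<ge> 0" using assms(1) unfolding Dk_def by blast
    then show ?thesis by simp
  qed
qed

definition finv :: "nat \<Rightarrow> nat \<Rightarrow> int list \<Rightarrow> nat \<Rightarrow> tableau \<Rightarrow> bool" where
  "finv n k a i T \<longleftrightarrow> (\<exists>h. (\<forall>c\<in>{1..n}. \<forall>r\<in>{1..k+1}. (T c r \<noteq> 0 \<longleftrightarrow> r \<le> h c))
     \<and> (\<forall>c\<in>{1..n}. h c \<le> k+1 \<and> (1 \<le> h c \<longleftrightarrow> c \<le> cntk k (take i a)))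
     \<and> sum h {1..n} = i)"

lemma sum_bump: fixes c0 n :: nat shows "c0 \<in> {1..n} \<Longrightarrow> sum (\<lambda>c. h c + (if c = c0 then 1 else 0)) {1..n} = sum h {1..n} + (1::nat)"
proof -
  assume c0: "c0 \<in> {1..n}"
  have "(\<Sum>c\<in>{1..n}. (if c = c0 then 1 else 0)) = (1::nat)"
    using c0 by (subst sum.delta) auto
  then show ?thesis by (simp add: sum.distrib)
qed

lemma lowest_row_h:
  assumes "\<forall>r\<in>{1..k+1}. (T c r \<noteq> 0 \<longleftrightarrow> r \<le> hc)" "1 \<le> hc" "hc \<le> k+1"
  shows "lowest_row k T c = hc"
proof -
  have "{r\<in>{1..k+1}. T c r \<noteq> 0} = {1..hc}" using assms by auto
  moreover have "Max {1..hc} = hc" using assms(2) by (intro Max_eqI) auto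
  ultimately show ?thesis unfolding lowest_row_def by simp
qed

lemma col_nonempty_h:
  assumes "\<forall>r\<in>{1..k+1}. (T c r \<noteq> 0 \<longleftrightarrow> r \<le> hc)"
  shows "col_nonempty k T c \<longleftrightarrow> 1 \<le> hc"
  using assms unfolding col_nonempty_def by (metis atLeastAtMost_iff le_add2 le_refl order_trans plus_1_eq_Suc)

lemma finv_step:
  assumes D: "a \<in> Dk n k" and n1: "n \<ge> 1" and k1: "k \<ge> 1"
    and I: "finv n k a (i - 1) T" and i2: "2 \<le> i" and iN: "i \<le> length a"
  shows "finv n k a i (fill_step n k T i (a ! (i - 1)))
     \<and> (\<forall>c r. T c r \<noteq> 0 \<longrightarrow> fill_step n k T i (a ! (i - 1)) c r = T c r)"
proof -
  obtain h where H1: "\<forall>c\<in>{1..n}. \<forall>r\<in>{1..k+1}. (T c r \<noteq> 0 \<longleftrightarrow> r \<le> h c)"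
    and H2: "\<forall>c\<in>{1..n}. h c \<le> k+1 \<and> (1 \<le> h c \<longleftrightarrow> c \<le> cntk k (take (i - 1) a))"
    and H3: "sum h {1..n} = i - 1"
    using I unfolding finv_def by blast
  define p where "p = cntk k (take (i - 1) a)"
  define x where "x = a ! (i - 1)"
  have il: "i - 1 < length a" using iN i2 by simp
  have si: "Suc (i - 1) = i" using i2 by simp
  have tk: "take i a = take (i - 1) a @ [x]"
    using take_Suc_conv_app_nth[OF il] unfolding x_def si .
  have xs: "x = int k \<or> x = -1" using Dk_facts(2)[OF D n1 k1] il unfolding x_def by (simp add: nth_mem)
  have cnt: "cntk k (take i a) = p + (if x = int k then 1 else 0)" unfolding tk p_def cntk_def by simp
  have pn: "cntk k (take i a) \<le> n" using cntk_take_le[of k i a] Dk_facts(3)[OF D n1 k1] by simp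
  have NE: "\<forall>c\<in>{1..n}. col_nonempty k T c \<longleftrightarrow> 1 \<le> h c" using H1 col_nonempty_h by blast
  have Hp: "\<forall>c\<in>{1..n}. h c \<le> k+1 \<and> (1 \<le> h c \<longleftrightarrow> c \<le> p)" using H2 p_def by simp
  show ?thesis
  proof (cases "x = -1")
    case True
    have xk: "x \<noteq> int k" using True k1 by simp
    have cnt': "cntk k (take i a) = p" using cnt xk by simp
    have set_take: "\<forall>y\<in>set (take i a). y = int k \<or> y = -1"
      using Dk_facts(2)[OF D n1 k1] by (meson in_set_takeD)
    have li: "length (take i a) = i" using iN by simp
    have "sum_list (take i a) = int k * int p - (int i - int p)"
      using sum_list_cntk[OF set_take k1] cnt' li by simp
    moreover have "sum_list (take i a) \<ge> 0" using Dk_facts(4)[OF D n1 k1 iN] .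
    ultimately have "int i \<le> int k * int p + int p" by linarith
    moreover have "int ((k+1) * p) = int k * int p + int p" by (simp add: algebra_simps)
    ultimately have "int i \<le> int ((k+1) * p)" by linarith
    then have kp: "i \<le> (k+1) * p" by (simp only: of_nat_le_iff)
    define act where "act = active_cols n k T"
    have act_eq: "act = {c\<in>{1..n}. c \<le> p \<and> h c < k+1}"
    proof -
      have "c \<in> act \<longleftrightarrow> c \<in> {c\<in>{1..n}. c \<le> p \<and> h c < k+1}" for c
      proof (cases "c \<in> {1..n}")
        case True
        show ?thesis
        proof (cases "1 \<le> h c")
          case True2: True
          have "lowest_row k T c = h c" using lowest_row_h[of k T c "h c"] H1 Hp True True2 by blast
          moreover have "col_nonempty k T c" using NE True True2 by blast
          moreover have "c \<le> p" "h c \<le> k+1" using Hp True True2 by blast+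
          ultimately show ?thesis unfolding act_def active_cols_def using True by auto
        next
          case False
          then show ?thesis unfolding act_def active_cols_def using NE Hp True by auto
        qed
      next
        case False
        then show ?thesis unfolding act_def active_cols_def by auto
      qed
      then show ?thesis by blast
    qed
    have act_ne: "act \<noteq> {}"
    proof
      assume e: "act = {}"
      have hv: "\<forall>c\<in>{1..n}. h c = (if c \<le> p then k+1 else 0)"
      proof
        fix c assume c: "c \<in> {1..n}"
        show "h c = (if c \<le> p then k+1 else 0)"
        proof (cases "c \<le> p")
          case True
          then have "\<not> h c < k+1" using e c act_eq by blast
          moreover have "h c \<le> k+1" using Hp c by blast
          ultimately show ?thesis using True by simp
        next
          case False
          then have "\<not> 1 \<le> h c" using Hp c by blast
          then show ?thesis using False by simp
        qed
      qed
      have "sum h {1..n} = (\<Sum>c\<in>{1..n}. if c \<le> p then k+1 else 0)"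
        using hv by (intro sum.cong) auto
      also have "\<dots> = (\<Sum>c\<in>{c\<in>{1..n}. c \<le> p}. k+1)" by (rule sum.inter_filter[symmetric]) simp
      also have "{c\<in>{1..n}. c \<le> p} = {1..p}" using pn cnt' by auto
      also have "(\<Sum>c\<in>{1..p}. k+1) = p * (k+1)" by simp
      finally have "i - 1 = p * (k+1)" using H3 by simp
      then show False using kp i2 by (simp add: algebra_simps)
    qed
    define c0 where "c0 = (ARG_MIN (\<lambda>c. T c (lowest_row k T c)) c. c \<in> active_cols n k T)"
    obtain cc where "cc \<in> act" using act_ne by blast
    then have "c0 \<in> act" unfolding c0_def act_def using argmin_nat[of "\<lambda>c. c \<in> active_cols n k T" cc] by blast
    then have c0: "c0 \<in> {1..n}" "c0 \<le> p" "h c0 < k+1" using act_eq by auto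
    have h1: "1 \<le> h c0" using Hp c0 by blast
    have lr: "lowest_row k T c0 = h c0" using lowest_row_h[of k T c0 "h c0"] H1 c0 h1 by simp
    have FS: "fill_step n k T i (a ! (i - 1)) = T(c0 := (T c0)(h c0 + 1 := i))"
      unfolding fill_step_def x_def[symmetric] using True lr by (simp add: Let_def c0_def)
    have "h c0 + 1 \<in> {1..k+1}" using c0 by simp
    then have "T c0 (h c0 + 1) \<noteq> 0 \<longleftrightarrow> h c0 + 1 \<le> h c0" using H1 c0(1) by blast
    then have z: "T c0 (h c0 + 1) = 0" by simp
    define h' where "h' = (\<lambda>c. h c + (if c = c0 then 1 else 0))"
    have "finv n k a i (T(c0 := (T c0)(h c0 + 1 := i)))"
      unfolding finv_def
    proof (intro exI[of _ h'] conjI ballI)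
      fix c r assume c: "c \<in> {1..n}" and r: "r \<in> {1..k+1}"
      show "((T(c0 := (T c0)(h c0 + 1 := i))) c r \<noteq> 0) = (r \<le> h' c)"
        using H1 c r i2 by (auto simp: h'_def)
    next
      fix c assume c: "c \<in> {1..n}"
      show "h' c \<le> k + 1" using Hp c c0 by (auto simp: h'_def)
      show "(1 \<le> h' c) = (c \<le> cntk k (take i a))" using Hp c c0 cnt' by (auto simp: h'_def)
    next
      show "sum h' {1..n} = i" unfolding h'_def using sum_bump[OF c0(1), of h] H3 i2 by simp
    qed
    moreover have "\<forall>c r. T c r \<noteq> 0 \<longrightarrow> (T(c0 := (T c0)(h c0 + 1 := i))) c r = T c r"
      using z by auto
    ultimately show ?thesis using FS by simp
  next
    case False
    then have xk: "x = int k" using xs by simp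
    have cnt': "cntk k (take i a) = p + 1" using cnt xk by simp
    have p1: "p + 1 \<in> {1..n}" using pn cnt' by simp
    have Lst: "(LEAST c. c \<in> {1..n} \<and> \<not> col_nonempty k T c) = p + 1"
    proof (rule Least_equality)
      show "p + 1 \<in> {1..n} \<and> \<not> col_nonempty k T (p + 1)" using p1 NE Hp by auto
    next
      fix y assume "y \<in> {1..n} \<and> \<not> col_nonempty k T y"
      then have "y \<in> {1..n}" "\<not> 1 \<le> h y" using NE by auto
      then have "\<not> y \<le> p" using Hp by blast
      then show "p + 1 \<le> y" by simp
    qed
    have FS: "fill_step n k T i (a ! (i - 1)) = T(p+1 := (T (p+1))(1 := i))"
      unfolding fill_step_def x_def[symmetric] using False Lst by (simp add: Let_def)
    have "\<not> 1 \<le> h (p+1)" using Hp p1 by simp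
    then have h0: "h (p+1) = 0" by simp
    have "(1::nat) \<in> {1..k+1}" by simp
    then have "T (p+1) 1 \<noteq> 0 \<longleftrightarrow> 1 \<le> h (p+1)" using H1 p1 by blast
    then have z: "T (p+1) 1 = 0" using h0 by simp
    define h' where "h' = (\<lambda>c. h c + (if c = p+1 then 1 else 0))"
    have "finv n k a i (T(p+1 := (T (p+1))(1 := i)))"
      unfolding finv_def
    proof (intro exI[of _ h'] conjI ballI)
      fix c r assume c: "c \<in> {1..n}" and r: "r \<in> {1..k+1}"
      show "((T(p+1 := (T (p+1))(1 := i))) c r \<noteq> 0) = (r \<le> h' c)"
        using H1 c r i2 h0 by (auto simp: h'_def)
    next
      fix c assume c: "c \<in> {1..n}"
      show "h' c \<le> k + 1" using Hp c h0 k1 by (auto simp: h'_def)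
      show "(1 \<le> h' c) = (c \<le> cntk k (take i a))" using Hp c cnt' by (auto simp: h'_def)
    next
      show "sum h' {1..n} = i" unfolding h'_def using sum_bump[OF p1, of h] H3 i2 by simp
    qed
    moreover have "\<forall>c r. T c r \<noteq> 0 \<longrightarrow> (T(p+1 := (T (p+1))(1 := i))) c r = T c r"
      using z by auto
    ultimately show ?thesis using FS by simp
  qed
qed

lemma a0k:
  assumes D: "a \<in> Dk n k" and n1: "n \<ge> 1" and k1: "k \<ge> 1"
  shows "a ! 0 = int k"
proof -
  have L: "length a \<ge> 2" using Dk_facts(1)[OF D n1 k1] n1 k1
    by (metis add_mono mult_le_mono nat_1_add_1 nat_mult_1)
  then have t1: "take 1 a = [a ! 0]" by (cases a) auto
  have "sum_list (take 1 a) \<ge> 0" using Dk_facts(4)[OF D n1 k1] L by simp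
  then have "a ! 0 \<noteq> -1" using t1 by auto
  moreover have "0 < length a" using L by linarith
  then have "a ! 0 \<in> set a" by (rule nth_mem)
  then have "a ! 0 = int k \<or> a ! 0 = -1" using Dk_facts(2)[OF D n1 k1] by blast
  ultimately show ?thesis by blast
qed

lemma finv_tst:
  assumes D: "a \<in> Dk n k" and n1: "n \<ge> 1" and k1: "k \<ge> 1"
  shows "1 \<le> i \<Longrightarrow> i \<le> length a \<Longrightarrow> finv n k a i (tst n k a i)"
proof (induction i)
  case 0
  then show ?case by simp
next
  case (Suc i)
  show ?case
  proof (cases "i = 0")
    case True
    have L: "length a \<ge> 1" using Suc.prems by simp
    then have t1: "take 1 a = [a ! 0]" by (cases a) auto
    have c1: "cntk k (take 1 a) = 1" unfolding t1 cntk_def using a0k[OF D n1 k1] by simp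
    define h0 where "h0 = (\<lambda>c::nat. if c = 1 then 1 else (0::nat))"
    have A1: "\<forall>c\<in>{1..n}. \<forall>r\<in>{1..k+1}. (fill_init c r \<noteq> 0 \<longleftrightarrow> r \<le> h0 c)"
      by (auto simp: fill_init_def h0_def)
    have A2: "\<forall>c\<in>{1..n}. h0 c \<le> k+1 \<and> (1 \<le> h0 c \<longleftrightarrow> c \<le> cntk k (take (Suc i) a))"
      using c1 True by (auto simp: h0_def)
    have "(\<Sum>c\<in>{1..n}. (if c = 1 then 1 else 0)) = (1::nat)"
      using n1 by (subst sum.delta) auto
    then have A3: "sum h0 {1..n} = Suc i" using True by (simp add: h0_def)
    have "tst n k a (Suc i) = fill_init" using True tst_1 by simp
    then show ?thesis unfolding finv_def using A1 A2 A3 by auto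
  next
    case False
    then have IH: "finv n k a i (tst n k a i)" using Suc by simp
    have "finv n k a (Suc i) (fill_step n k (tst n k a i) (Suc i) (a ! (Suc i - 1)))"
      using finv_step[OF D n1 k1 _ _ Suc.prems(2), of "tst n k a i"] IH False by simp
    then show ?thesis using tst_Suc[of i n k a] False by simp
  qed
qed

lemma tst_pres:
  assumes D: "a \<in> Dk n k" and n1: "n \<ge> 1" and k1: "k \<ge> 1"
  shows "1 \<le> j \<Longrightarrow> j \<le> i \<Longrightarrow> i \<le> length a \<Longrightarrow> tst n k a j c r \<noteq> 0 \<Longrightarrow> tst n k a i c r = tst n k a j c r"
proof (induction i)
  case 0
  then show ?case by simp
next
  case (Suc i)
  show ?case
  proof (cases "j = Suc i")
    case True then show ?thesis by simp
  next
    case False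
    then have ji: "j \<le> i" "1 \<le> i" using Suc.prems by auto
    have IH: "tst n k a i c r = tst n k a j c r" using Suc ji by simp
    have "finv n k a i (tst n k a i)" using finv_tst[OF D n1 k1 ji(2)] Suc.prems by simp
    then have "\<forall>c r. tst n k a i c r \<noteq> 0 \<longrightarrow> fill_step n k (tst n k a i) (Suc i) (a ! (Suc i - 1)) c r = tst n k a i c r"
      using finv_step[OF D n1 k1 _ _ Suc.prems(3), of "tst n k a i"] ji by simp
    then show ?thesis using tst_Suc[of i n k a] ji IH Suc.prems(4) by simp
  qed
qed

lemma tst_full:
  assumes D: "a \<in> Dk n k" and n1: "n \<ge> 1" and k1: "k \<ge> 1"
    and c: "c \<in> {1..n}" and r: "r \<in> {1..k+1}"
  shows "tst n k a (length a) c r \<noteq> 0"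
proof -
  have L: "length a = n + n * k" using Dk_facts(1)[OF D n1 k1] .
  have "finv n k a (length a) (tst n k a (length a))"
    using finv_tst[OF D n1 k1] L n1 by simp
  then obtain h where H1: "\<forall>c\<in>{1..n}. \<forall>r\<in>{1..k+1}. (tst n k a (length a) c r \<noteq> 0 \<longleftrightarrow> r \<le> h c)"
    and H2: "\<forall>c\<in>{1..n}. h c \<le> k+1" and H3: "sum h {1..n} = length a"
    unfolding finv_def by blast
  have "h c = k + 1"
  proof (rule ccontr)
    assume "h c \<noteq> k + 1"
    then have "h c < k + 1" using H2 c by force
    then have "sum h {1..n} < sum (\<lambda>_. k+1) {1..n}"
      using H2 c by (intro sum_strict_mono_ex1) auto
    then show False using H3 L by (simp add: algebra_simps)
  qed
  then show ?thesis using H1 c r by auto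
qed

lemma first_W:
  assumes D: "a \<in> Dk n k" and n1: "n \<ge> 1" and k1: "k \<ge> 1"
  shows "\<exists>j0. 1 \<le> j0 \<and> j0 < length a \<and> a ! j0 = -1 \<and> (\<forall>j<j0. a ! j = int k)"
proof -
  have L: "length a = n + n * k" using Dk_facts(1)[OF D n1 k1] .
  have S: "\<forall>x\<in>set a. x = int k \<or> x = -1" using Dk_facts(2)[OF D n1 k1] .
  have ex: "\<exists>j. j < length a \<and> a ! j = -1"
  proof (rule ccontr)
    assume "\<not> ?thesis"
    then have "\<forall>x\<in>set a. x = int k" using S by (metis in_set_conv_nth)
    then have "cntk k a = length a" unfolding cntk_def by (simp add: filter_id_conv)
    then show False using Dk_facts(3)[OF D n1 k1] L n1 k1 by simp
  qed
  define j0 where "j0 = (LEAST j. j < length a \<and> a ! j = -1)"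
  have j0: "j0 < length a \<and> a ! j0 = -1" unfolding j0_def using ex by (metis (mono_tags, lifting) LeastI)
  have before: "\<forall>j<j0. a ! j = int k"
  proof (intro allI impI)
    fix j assume "j < j0"
    then have "\<not> (j < length a \<and> a ! j = -1)" unfolding j0_def using not_less_Least by blast
    moreover have "j < length a" using \<open>j < j0\<close> j0 by simp
    ultimately have "a ! j \<noteq> -1" by simp
    moreover have "a ! j \<in> set a" using \<open>j < length a\<close> by (rule nth_mem)
    ultimately show "a ! j = int k" using S by blast
  qed
  have "j0 \<noteq> 0"
  proof
    assume "j0 = 0"
    then have "int k = -1" using j0 a0k[OF D n1 k1] by simp
    then show False by simp
  qed
  then show ?thesis using j0 before by (intro exI[of _ j0]) simp
qed

definition pre_tab :: "nat \<Rightarrow> tableau" where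
  "pre_tab i = (\<lambda>c r. if r = 1 \<and> 1 \<le> c \<and> c \<le> i then c else 0)"

lemma stage_pre:
  assumes D: "a \<in> Dk n k" and n1: "n \<ge> 1" and k1: "k \<ge> 1"
    and j0: "j0 < length a" "\<forall>j<j0. a ! j = int k"
  shows "1 \<le> i \<Longrightarrow> i \<le> j0 \<Longrightarrow> tst n k a i = pre_tab i \<and> i \<le> n"
proof (induction i)
  case 0
  then show ?case by simp
next
  case (Suc i)
  have iN: "Suc i \<le> n"
  proof -
    have "\<forall>x\<in>set (take (Suc i) a). x = int k"
    proof
      fix x assume "x \<in> set (take (Suc i) a)"
      then obtain m where m: "m < length (take (Suc i) a)" "take (Suc i) a ! m = x" by (auto simp: in_set_conv_nth)
      then have mi: "m < Suc i" by simp
      then have "a ! m = x" using m(2) by simp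
      moreover have "m < j0" using mi Suc.prems by simp
      ultimately show "x = int k" using j0(2) by simp
    qed
    then have "filter (\<lambda>x. x = int k) (take (Suc i) a) = take (Suc i) a" by (rule filter_True)
    moreover have "length (take (Suc i) a) = Suc i" using j0(1) Suc.prems by simp
    ultimately have "cntk k (take (Suc i) a) = Suc i" unfolding cntk_def by simp
    then show ?thesis using cntk_take_le[of k "Suc i" a] Dk_facts(3)[OF D n1 k1] by simp
  qed
  show ?case
  proof (cases "i = 0")
    case True
    have "tst n k a (Suc 0) = fill_init" by (simp add: tst_def)
    then show ?thesis using iN True by (auto simp: pre_tab_def fill_init_def fun_eq_iff)
  next
    case False
    then have IH: "tst n k a i = pre_tab i" using Suc by simp
    have ai: "a ! i = int k" using j0 Suc.prems by simp
    have ne: "a ! i \<noteq> -1" using ai by simp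
    have cn: "col_nonempty k (pre_tab i) c \<longleftrightarrow> 1 \<le> c \<and> c \<le> i" for c
      unfolding col_nonempty_def pre_tab_def by auto
    have Lst: "(LEAST c. c \<in> {1..n} \<and> \<not> col_nonempty k (pre_tab i) c) = Suc i"
    proof (rule Least_equality)
      show "Suc i \<in> {1..n} \<and> \<not> col_nonempty k (pre_tab i) (Suc i)" using iN cn by simp
    next
      fix y assume "y \<in> {1..n} \<and> \<not> col_nonempty k (pre_tab i) y"
      then have "1 \<le> y" "\<not> (1 \<le> y \<and> y \<le> i)" using cn by auto
      then show "Suc i \<le> y" by simp
    qed
    have "tst n k a (Suc i) = fill_step n k (pre_tab i) (Suc i) (a ! i)" using tst_Suc[of i n k a] False IH by simp
    also have "\<dots> = (pre_tab i)(Suc i := (pre_tab i (Suc i))(1 := Suc i))"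
      unfolding fill_step_def using ne Lst by (simp add: Let_def)
    also have "\<dots> = pre_tab (Suc i)" by (auto simp: pre_tab_def fun_eq_iff)
    finally show ?thesis using iN by simp
  qed
qed

definition w_tab :: "nat \<Rightarrow> tableau" where
  "w_tab j0 = (\<lambda>c r. if c = 1 \<and> r = 2 then Suc j0 else if r = 1 \<and> 1 \<le> c \<and> c \<le> j0 then c else 0)"

lemma stage_w:
  assumes D: "a \<in> Dk n k" and n1: "n \<ge> 1" and k1: "k \<ge> 1"
    and j0: "1 \<le> j0" "j0 < length a" "a ! j0 = -1" "\<forall>j<j0. a ! j = int k"
  shows "tst n k a (Suc j0) = w_tab j0" and "j0 \<le> n"
proof -
  have P: "tst n k a j0 = pre_tab j0 \<and> j0 \<le> n" using stage_pre[OF D n1 k1 j0(2) j0(4) j0(1)] by simp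
  then show jn: "j0 \<le> n" by simp
  let ?T = "pre_tab j0"
  have lr: "lowest_row k ?T c = 1" if "1 \<le> c" "c \<le> j0" for c
    by (rule lowest_row_h) (use that k1 in \<open>auto simp: pre_tab_def\<close>)
  have cn: "col_nonempty k ?T c \<longleftrightarrow> 1 \<le> c \<and> c \<le> j0" for c
    unfolding col_nonempty_def pre_tab_def by auto
  have act: "active_cols n k ?T = {1..j0}"
    unfolding active_cols_def using cn lr jn k1 by auto
  define cs where "cs = (ARG_MIN (\<lambda>c. ?T c (lowest_row k ?T c)) c. c \<in> active_cols n k ?T)"
  have "1 \<in> active_cols n k ?T" using act j0 by simp
  have A: "cs \<in> active_cols n k ?T \<and> (\<forall>y. y \<in> active_cols n k ?T \<longrightarrow> ?T cs (lowest_row k ?T cs) \<le> ?T y (lowest_row k ?T y))"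
    unfolding cs_def by (rule argmin_nat) fact
  have cs: "cs \<in> {1..j0}" "?T cs (lowest_row k ?T cs) \<le> ?T 1 (lowest_row k ?T 1)"
    using A \<open>1 \<in> active_cols n k ?T\<close> act by blast+
  have "?T cs (lowest_row k ?T cs) = cs" using cs(1) lr by (simp add: pre_tab_def)
  moreover have "?T 1 (lowest_row k ?T 1) = 1" using lr j0 by (simp add: pre_tab_def)
  ultimately have cs1: "cs = 1" using cs by simp
  have "tst n k a (Suc j0) = fill_step n k ?T (Suc j0) (a ! j0)" using tst_Suc[of j0 n k a] j0 P by simp
  also have "\<dots> = ?T(cs := (?T cs)(lowest_row k ?T cs + 1 := Suc j0))"
    unfolding fill_step_def using j0(3) by (simp add: Let_def cs_def[symmetric])
  also have "lowest_row k ?T cs + 1 = 2" using cs1 lr[of 1] j0(1) by simp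
  also have "?T(cs := (?T cs)(2 := Suc j0)) = ?T(1 := (?T 1)(2 := Suc j0))" using cs1 by simp
  also have "\<dots> = w_tab j0" by (auto simp: pre_tab_def w_tab_def fun_eq_iff)
  finally show "tst n k a (Suc j0) = w_tab j0" .
qed

lemma foldl_upd_notin:
  "c \<notin> set xs \<Longrightarrow> foldl (\<lambda>f x. f(x := H f x)) g xs c = g c"
  by (induction xs arbitrary: g) auto

lemma final_props:
  assumes D: "a \<in> Dk n k" and n1: "n \<ge> 1" and k1: "k \<ge> 1"
    and j0: "1 \<le> j0" "j0 < length a" "a ! j0 = -1" "\<forall>j<j0. a ! j = int k"
  shows "rankR n k (fillT n k a) (1,1) = 0" and "rankR n k (fillT n k a) (1,2) = 1"
    and "\<forall>b\<in>boxes n k. b \<noteq> (1,2) \<and> rankR n k (fillT n k a) b = 1 \<longrightarrow> idx (fillT n k a) (1,2) < idx (fillT n k a) b"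
proof -
  define T where "T = fillT n k a"
  have TT: "T = tst n k a (length a)" unfolding T_def fillT_tst ..
  have W: "tst n k a (Suc j0) = w_tab j0" and jn: "j0 \<le> n" using stage_w[OF D n1 k1 j0] by auto
  have sj: "Suc j0 \<le> length a" using j0 by simp
  have P1: "T c 1 = c" if "1 \<le> c" "c \<le> j0" for c
  proof -
    have "tst n k a (Suc j0) c 1 = c" using W that by (simp add: w_tab_def)
    moreover have "tst n k a (Suc j0) c 1 \<noteq> 0" using W that by (simp add: w_tab_def)
    ultimately show ?thesis using tst_pres[OF D n1 k1, where j="Suc j0" and i="length a" and c=c and r=1] sj TT by simp
  qed
  have P2: "T 1 2 = Suc j0"
  proof -
    have "tst n k a (Suc j0) 1 2 = Suc j0" using W by (simp add: w_tab_def)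
    then show ?thesis using tst_pres[OF D n1 k1, where j="Suc j0" and i="length a" and c=1 and r=2] sj TT by simp
  qed
  have P3: "Suc j0 < T c r" if "(c,r) \<in> boxes n k" "\<not> (r = 1 \<and> c \<le> j0)" "(c,r) \<noteq> (1,2)" for c r
  proof -
    have "tst n k a (Suc j0) c r = 0" using W that by (auto simp: w_tab_def boxes_def)
    moreover have "T c r \<noteq> 0" using tst_full[OF D n1 k1, where c=c and r=r] that TT by (simp add: boxes_def)
    ultimately show ?thesis using tst_mono_cell[OF sj, where n=n and k=k and a=a and c=c and r=r] TT by auto
  qed
  have pos: "pos_of n k T m = (m,1)" if m: "1 \<le> m" "m \<le> j0" for m
    unfolding pos_of_def
  proof (rule the_equality)
    show "(m, 1) \<in> boxes n k \<and> T (fst (m, 1)) (snd (m, 1)) = m" using m jn P1 by (simp add: boxes_def)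
  next
    fix b assume b: "b \<in> boxes n k \<and> T (fst b) (snd b) = m"
    obtain c r where cr: "b = (c,r)" by fastforce
    show "b = (m, 1)"
    proof (cases "r = 1 \<and> c \<le> j0")
      case True
      then have "T c r = c" using P1 b cr by (auto simp: boxes_def)
      then show ?thesis using b cr True by simp
    next
      case False
      show ?thesis
      proof (cases "(c,r) = (1,2)")
        case True
        then show ?thesis using b cr P2 m by simp
      next
        case False2: False
        have "Suc j0 < T c r" using P3 b cr False False2 by blast
        then show ?thesis using b cr m by simp
      qed
    qed
  qed
  define G where "G = (\<lambda>f c. (let b = pos_of n k T (T c 1 - 1) in f (fst b) + (snd b - (1::nat))))"
  have TR: "top_rank n k T = foldl (\<lambda>f c. f(c := G f c)) (\<lambda>_. 0) [2..<n+1]"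
    unfolding top_rank_def G_def ..
  have Z: "m \<le> j0 \<Longrightarrow> foldl (\<lambda>f c. f(c := G f c)) (\<lambda>_. 0) [2..<Suc m] = (\<lambda>_. 0)" for m
  proof (induction m)
    case 0
    then show ?case by simp
  next
    case (Suc m)
    show ?case
    proof (cases "m = 0")
      case True
      then show ?thesis by simp
    next
      case False
      have e: "[2..<Suc (Suc m)] = [2..<Suc m] @ [Suc m]" using False by simp
      have IH: "foldl (\<lambda>f c. f(c := G f c)) (\<lambda>_. 0) [2..<Suc m] = (\<lambda>_. 0)"
        by (rule Suc.IH) (use Suc.prems in simp)
      have "T (Suc m) 1 = Suc m" using P1 Suc.prems by simp
      then have "G (\<lambda>_. 0) (Suc m) = 0" unfolding G_def using pos[of m] False Suc.prems by (simp add: Let_def)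
      then show ?thesis unfolding e foldl_append IH by (simp del: upt_Suc add: fun_eq_iff)
    qed
  qed
  have top0: "top_rank n k T c = 0" if "c \<le> j0" for c
  proof -
    have e: "Suc j0 + (n - j0) = n + 1" using jn by simp
    have "[2..<Suc j0 + (n - j0)] = [2..<Suc j0] @ [Suc j0..<Suc j0 + (n - j0)]"
      by (rule upt_add_eq_append) (use j0(1) in simp)
    then have "[2..<n+1] = [2..<Suc j0] @ [Suc j0..<n+1]" unfolding e .
    then have "top_rank n k T = foldl (\<lambda>f c. f(c := G f c)) (foldl (\<lambda>f c. f(c := G f c)) (\<lambda>_. 0) [2..<Suc j0]) [Suc j0..<n+1]"
      unfolding TR by (simp del: upt_Suc)
    also have "\<dots> = foldl (\<lambda>f c. f(c := G f c)) (\<lambda>_. 0) [Suc j0..<n+1]" using Z by simp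
    finally show ?thesis using foldl_upd_notin[of c "[Suc j0..<n+1]" G "\<lambda>_. 0"] that by simp
  qed
  have t1: "top_rank n k T 1 = 0" using top0 j0 by simp
  show "rankR n k (fillT n k a) (1,1) = 0" using t1 unfolding T_def rankR_def by simp
  show "rankR n k (fillT n k a) (1,2) = 1" using t1 unfolding T_def rankR_def by simp
  show "\<forall>b\<in>boxes n k. b \<noteq> (1,2) \<and> rankR n k (fillT n k a) b = 1 \<longrightarrow> idx (fillT n k a) (1,2) < idx (fillT n k a) b"
  proof (intro ballI impI)
    fix b assume b: "b \<in> boxes n k" "b \<noteq> (1,2) \<and> rankR n k (fillT n k a) b = 1"
    obtain c r where cr: "b = (c,r)" by fastforce
    have nr: "\<not> (r = 1 \<and> c \<le> j0)"
    proof
      assume "r = 1 \<and> c \<le> j0"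
      then have "rankR n k T b = 0" using top0 cr by (simp add: rankR_def)
      then show False using b T_def by simp
    qed
    have "Suc j0 < T c r" using P3 b cr nr by blast
    then show "idx (fillT n k a) (1,2) < idx (fillT n k a) b" using P2 cr T_def by (simp add: idx_def)
  qed
qed

theorem mainTheorem8:
  fixes n k :: nat and a :: "int list"
  assumes "n \<ge> 1" and "k \<ge> 1" and "a \<in> Dk n k"
  shows "walk_next n k (fillT n k a) (last (walk n k (fillT n k a))) (set (walk n k (fillT n k a))) = None
         \<and> last (walk n k (fillT n k a)) = smallest_rank1 n k (fillT n k a)"
proof -
  obtain j0 where j0: "1 \<le> j0" "j0 < length a" "a ! j0 = -1" "\<forall>j<j0. a ! j = int k"
    using first_W[OF assms(3) assms(1) assms(2)] by blast
  note F = final_props[OF assms(3) assms(1) assms(2) j0]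
  show ?thesis by (rule walk_final[OF assms(1) assms(2) F])
qed

end
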